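(* Let $p\in\mathbb{R}$ and $h_p(x)=(1-x)^pK(x)$ on $(0,1)$. Then $h_p$ is strictly convex on $(0,1)$ if and only if $p\le 0$ or $p\ge \frac{3(2+\sqrt2)}{8}$, and $h_p$ is strictly concave on $(0,1)$ if and only if $p\in\big[\frac{3(2-\sqrt2)}{8},1\big]$.
   Context: $K(x)={\cal K}(\sqrt x)=\frac\pi2\,{}_2F_1(1/2,1/2;1;x)$ for $x\in[0,1)$, where ${\cal K}(r)=\int_0^{\pi/2}(1-r^2\sin^2t)^{-1/2}dt$ is the complete elliptic integral of the first kind. *)

theory Defs
  imports "HOL-Analysis.Analysis"
begin

text \<open>Complete elliptic integral of the first kind, as a function of the modulus r.\<close>
definition ellK_mod :: "real \<Rightarrow> real" where
  "ellK_mod r = integral {0..pi/2} (\<lambda>t. 1 / sqrt (1 - r\<^sup>2 * (sin t)\<^sup>2))"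

definition ellK :: "real \<Rightarrow> real" where
  "ellK x = ellK_mod (sqrt x)"

definition strictly_convex_on :: "real set \<Rightarrow> (real \<Rightarrow> real) \<Rightarrow> bool" where
  "strictly_convex_on S f \<longleftrightarrow>
     (\<forall>x\<in>S. \<forall>y\<in>S. \<forall>u::real. x \<noteq> y \<and> 0 < u \<and> u < 1 \<longrightarrow>
        f ((1 - u) * x + u * y) < (1 - u) * f x + u * f y)"

definition strictly_concave_on :: "real set \<Rightarrow> (real \<Rightarrow> real) \<Rightarrow> bool" where
  "strictly_concave_on S f \<longleftrightarrow>
     (\<forall>x\<in>S. \<forall>y\<in>S. \<forall>u::real. x \<noteq> y \<and> 0 < u \<and> u < 1 \<longrightarrow>
        f ((1 - u) * x + u * y) > (1 - u) * f x + u * f y)"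

end

theory Submission
  imports Defs
begin

fun cc :: "nat \<Rightarrow> real" where
  "cc 0 = 1" | "cc (Suc n) = cc n * (2*n+1)/(2*n+2)"

lemma cc_pos: "0 < cc n"
  by (induction n) auto

lemma cc_le1: "cc n \<le> 1"
proof (induction n)
  case (Suc n)
  have "(2*real n+1)/(2*n+2) \<le> 1" by (simp add: field_simps)
  then have "cc n * ((2*real n+1)/(2*n+2)) \<le> 1 * 1"
    using Suc cc_pos[of n] by (intro mult_mono) auto
  moreover have "cc (Suc n) = cc n * ((2*real n+1)/(2*n+2))" by simp
  ultimately show ?case by linarith
qed simp

lemma cc_gchoose: "cc n = (-1)^n * ((-1/2::real) gchoose n)"
proof (induction n)
  case (Suc n)
  have "(-1/2::real) * ((-1/2) gchoose n) = n * ((-1/2) gchoose n) + (Suc n) * ((-1/2) gchoose (Suc n))"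
    by (rule gbinomial_mult_1)
  then have "((-1/2::real) gchoose (Suc n)) = - ((2*n+1)/(2*n+2)) * ((-1/2) gchoose n)"
    by (simp add: field_simps) 
  then have "(-1)^Suc n * ((-1/2::real) gchoose (Suc n)) = ((-1)^n * ((-1/2) gchoose n)) * ((2*n+1)/(2*n+2))"
    by simp
  moreover have "cc (Suc n) = cc n * ((2*real n+1)/(2*n+2))" by simp
  ultimately show ?case using Suc by simp
qed simp

lemma binom_series:
  assumes "0 \<le> y" "y < 1"
  shows "(\<lambda>n. cc n * y^n) sums (1 / sqrt (1 - y))"
proof -
  have "(\<lambda>n. ((-1/2::real) gchoose n) * (-y)^n) sums (1 + (-y)) powr (-1/2)"
    by (rule gen_binomial_real) (use assms in auto)
  moreover have "(1 + (-y)) powr (-1/2) = 1 / sqrt (1 - y)"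
  proof -
    have "(-1/2::real) = - (1/2)" by simp
    then have "(1 + (-y)) powr (-1/2) = 1 / (1 - y) powr (1/2)"
      by (simp only: powr_minus_divide) simp
    also have "\<dots> = 1 / sqrt (1 - y)" using assms by (simp add: powr_half_sqrt)
    finally show ?thesis .
  qed
  moreover have "((-1/2::real) gchoose n) * (-y)^n = cc n * y^n" for n
  proof -
    have "cc n * y^n = ((-1)^n * ((-1/2::real) gchoose n)) * y^n" by (simp only: cc_gchoose)
    moreover have "(-y)^n = (-1)^n * y^n" by (rule power_minus)
    ultimately show ?thesis by (simp only: mult_ac)
  qed
  ultimately show ?thesis by (simp only:)
qed

lemma wallis_alg:
  fixes x y z :: real and n :: nat
  assumes "y * y = 1 - x * x"
  shows "- x * (x * z) + y * (real (2*n+1) * z * y) = real (2*n+1) * z - real (2*n+2) * (x * x * z)"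
proof -
  have "y * (real (2*n+1) * z * y) = real (2*n+1) * z * (y*y)" by (simp only: mult_ac)
  also have "\<dots> = real (2*n+1) * z * (1 - x*x)" using assms by simp
  finally show ?thesis by (simp add: algebra_simps)
qed

lemma wallis: "((\<lambda>t. sin t ^ (2*n)) has_integral (pi/2 * cc n)) {0..pi/2}"
proof (induction n)
  case 0
  then show ?case using has_integral_const_real[of "1::real" 0 "pi/2"] by simp
next
  case (Suc n)
  define \<phi> :: "real \<Rightarrow> real" where "\<phi> t = cos t * sin t ^ (2*n+1)" for t
  have d: "(\<phi> has_real_derivative ((2*n+1) * sin t ^ (2*n) - (2*n+2) * sin t ^ (2*n+2))) (at t within {0..pi/2})" for t
  proof -
    have d1: "((\<lambda>t. sin t ^ (2*n+1)) has_real_derivative (real (2*n+1) * sin t ^ (2*n) * cos t)) (at t within {0..pi/2})"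
      using DERIV_power[OF has_field_derivative_at_within[OF DERIV_sin[of t]], of "2*n+1" "{0..pi/2}"] by (simp add: mult_ac)
    have "(\<phi> has_real_derivative (- sin t * sin t ^ (2*n+1) + cos t * ((2*n+1) * sin t ^ (2*n) * cos t))) (at t within {0..pi/2})"
      unfolding \<phi>_def using DERIV_mult[OF has_field_derivative_at_within[OF DERIV_cos[of t]] d1] by (simp add: mult_ac)
    moreover have "- sin t * sin t ^ (2*n+1) + cos t * ((2*n+1) * sin t ^ (2*n) * cos t)
       = (2*n+1) * sin t ^ (2*n) - (2*n+2) * sin t ^ (2*n+2)"
    proof -
      have cs: "cos t * cos t = 1 - sin t * sin t" using sin_cos_squared_add[of t] by (simp add: power2_eq_square)
      have e: "sin t ^ (2*n+1) = sin t * sin t ^ (2*n)" "sin t ^ (2*n+2) = sin t * sin t * sin t ^ (2*n)"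
        by (simp_all add: power_Suc)
      show ?thesis unfolding e by (rule wallis_alg[OF cs])
    qed
    ultimately show ?thesis by simp
  qed
  have ftc: "((\<lambda>t. (2*n+1) * sin t ^ (2*n) - (2*n+2) * sin t ^ (2*n+2)) has_integral (\<phi> (pi/2) - \<phi> 0)) {0..pi/2}"
    by (rule fundamental_theorem_of_calculus) (use d in \<open>auto simp: has_real_derivative_iff_has_vector_derivative\<close>)
  have z: "\<phi> (pi/2) - \<phi> 0 = 0" by (simp add: \<phi>_def)
  have i1: "((\<lambda>t. (2*n+1) * sin t ^ (2*n)) has_integral ((2*n+1) * (pi/2 * cc n))) {0..pi/2}"
    using has_integral_mult_right[OF Suc] by simp
  have "((\<lambda>t. (2*n+1) * sin t ^ (2*n) - ((2*n+1) * sin t ^ (2*n) - (2*n+2) * sin t ^ (2*n+2))) has_integral ((2*n+1) * (pi/2 * cc n) - 0)) {0..pi/2}"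
    by (rule has_integral_diff[OF i1 ftc[unfolded z]])
  then have "((\<lambda>t. (2*n+2) * sin t ^ (2*n+2)) has_integral ((2*n+1) * (pi/2 * cc n))) {0..pi/2}"
    by simp
  from has_integral_mult_right[OF this, of "1/(2*n+2)"]
  have "((\<lambda>t. 1/(2*n+2) * ((2*n+2) * sin t ^ (2*n+2))) has_integral (1/(2*n+2) * ((2*n+1) * (pi/2 * cc n)))) {0..pi/2}"
    by simp
  moreover have "(\<lambda>t. 1/(2*n+2) * ((2*n+2) * sin t ^ (2*n+2))) = (\<lambda>t. sin t ^ (2*Suc n))"
    by (rule ext) (simp add: divide_simps)
  moreover have "1/(2*n+2) * ((2*n+1) * (pi/2 * cc n)) = pi/2 * cc (Suc n)"
    by (simp add: field_simps)
  ultimately show ?case by (simp only:)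
qed

definition aa :: "nat \<Rightarrow> real" where "aa n = (cc n)^2"

lemma aa_pos: "0 < aa n" and aa_le1: "aa n \<le> 1"
  using cc_pos[of n] cc_le1[of n] unfolding aa_def by (auto simp: power_le_one)

lemma aa_summable:
  assumes "\<bar>x\<bar> < 1" shows "summable (\<lambda>n. aa n * x^n)"
proof (rule summable_comparison_test)
  show "\<exists>N. \<forall>n\<ge>N. norm (aa n * x^n) \<le> \<bar>x\<bar>^n"
  proof (intro exI[of _ 0] allI impI)
    fix n :: nat
    have "\<bar>aa n\<bar> \<le> 1" using aa_pos[of n] aa_le1[of n] by auto
    then show "norm (aa n * x^n) \<le> \<bar>x\<bar>^n"
      by (auto simp: abs_mult power_abs intro!: mult_left_le_one_le)
  qed
  show "summable (\<lambda>n. \<bar>x\<bar>^n)" using assms by (simp add: summable_geometric)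
qed

lemma ellK_series:
  assumes x0: "0 \<le> x" and x1: "x < 1"
  shows "ellK x = pi/2 * (\<Sum>n. aa n * x^n)"
proof -
  define f where "f k t = (\<Sum>n<k. cc n * x^n * sin t ^ (2*n))" for k t
  define g where "g t = 1 / sqrt (1 - x * (sin t)^2)" for t
  have fi: "(f k has_integral (\<Sum>n<k. cc n * x^n * (pi/2 * cc n))) {0..pi/2}" for k
  proof -
    have w: "((\<lambda>t. cc n * x^n * sin t ^ (2*n)) has_integral (cc n * x^n * (pi/2 * cc n))) {0..pi/2}" for n
      by (rule has_integral_mult_right[OF wallis[of n]])
    show ?thesis unfolding f_def by (rule has_integral_sum) (use w in auto)
  qed
  have mono: "f k t \<le> f (Suc k) t" for k t
    unfolding f_def using cc_pos[of k] x0 by simp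
  have lim: "(\<lambda>k. f k t) \<longlonglongrightarrow> g t" for t
  proof -
    have y0: "0 \<le> x * (sin t)^2" using x0 by simp
    have "x * (sin t)^2 \<le> x * 1" using x0 by (intro mult_left_mono) (auto simp: abs_square_le_1)
    then have y1: "x * (sin t)^2 < 1" using x1 by linarith
    have "(\<lambda>n. cc n * (x * (sin t)^2)^n) sums g t"
      unfolding g_def by (rule binom_series[OF y0 y1])
    moreover have "cc n * (x * (sin t)^2)^n = cc n * x^n * sin t ^ (2*n)" for n
      by (simp add: power_mult_distrib power_mult)
    ultimately show ?thesis unfolding f_def sums_def by simp
  qed
  have "(\<lambda>n. aa n * x^n) sums (\<Sum>n. aa n * x^n)"
    using aa_summable[of x] x0 x1 by (simp add: summable_sums)
  then have "(\<lambda>n. pi/2 * (aa n * x^n)) sums (pi/2 * (\<Sum>n. aa n * x^n))"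
    by (rule sums_mult)
  moreover have "(\<lambda>n. pi/2 * (aa n * x^n)) = (\<lambda>n. cc n * x^n * (pi/2 * cc n))"
    by (rule ext) (simp add: aa_def power2_eq_square mult_ac)
  ultimately have l2: "(\<lambda>k. \<Sum>n<k. cc n * x^n * (pi/2 * cc n)) \<longlonglongrightarrow> pi/2 * (\<Sum>n. aa n * x^n)"
    unfolding sums_def by (simp only:)
  have "(g has_integral (pi/2 * (\<Sum>n. aa n * x^n))) {0..pi/2}"
    by (rule has_integral_monotone_convergence_increasing[OF fi mono lim l2])
  moreover have "ellK x = integral {0..pi/2} g"
    unfolding ellK_def ellK_mod_def g_def using x0 by simp
  ultimately show ?thesis by (simp add: integral_unique)
qed

definition FF :: "(nat \<Rightarrow> real) \<Rightarrow> real \<Rightarrow> real" where "FF c x = (\<Sum>n. c n * x^n)"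

lemma summ_diffs:
  assumes "\<And>y. \<bar>y\<bar> < 1 \<Longrightarrow> summable (\<lambda>n. c n * y^n)" "\<bar>x\<bar> < (1::real)"
  shows "summable (\<lambda>n. diffs c n * x^n)"
  by (rule termdiff_converges[where K=1]) (use assms in auto)

lemma deriv_FF:
  assumes sm: "\<And>y. \<bar>y\<bar> < 1 \<Longrightarrow> summable (\<lambda>n. c n * y^n)" and x: "\<bar>x\<bar> < (1::real)"
  shows "(FF c has_real_derivative FF (diffs c) x) (at x)"
proof -
  define K where "K = (1 + \<bar>x\<bar>)/2"
  have "summable (\<lambda>n. c n * K^n)" using x by (intro sm) (auto simp: K_def)
  moreover have "norm x < norm K" using x by (auto simp: K_def)
  ultimately show ?thesis unfolding FF_def by (rule termdiffs_strong)
qed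

definition a1 where "a1 = diffs aa"
definition a2 where "a2 = diffs a1"

lemma summ_aa: "\<bar>y\<bar> < 1 \<Longrightarrow> summable (\<lambda>n. aa n * y^n)" by (rule aa_summable)
lemma summ_a1: "\<bar>y\<bar> < 1 \<Longrightarrow> summable (\<lambda>n. a1 n * y^n)"
  unfolding a1_def by (rule summ_diffs[OF summ_aa])
lemma summ_a2: "\<bar>y\<bar> < 1 \<Longrightarrow> summable (\<lambda>n. a2 n * y^n)"
  unfolding a2_def by (rule summ_diffs[OF summ_a1])
lemma summ_a3: "\<bar>y\<bar> < 1 \<Longrightarrow> summable (\<lambda>n. diffs a2 n * y^n)"
  by (rule summ_diffs[OF summ_a2])

lemma d0: "\<bar>x\<bar> < 1 \<Longrightarrow> (FF aa has_real_derivative FF a1 x) (at x)"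
  unfolding a1_def by (rule deriv_FF[OF summ_aa])
lemma d1: "\<bar>x\<bar> < 1 \<Longrightarrow> (FF a1 has_real_derivative FF a2 x) (at x)"
  unfolding a2_def by (rule deriv_FF[OF summ_a1])
lemma d2: "\<bar>x\<bar> < 1 \<Longrightarrow> (FF a2 has_real_derivative FF (diffs a2) x) (at x)"
  by (rule deriv_FF[OF summ_a2])

definition shift :: "(nat \<Rightarrow> real) \<Rightarrow> nat \<Rightarrow> real" where
  "shift c n = (if n = 0 then 0 else c (n - 1))"

lemma shift_sums:
  assumes "summable (\<lambda>n. c n * x^n)"
  shows "(\<lambda>n. shift c n * x^n) sums (x * FF c x)"
proof -
  have "(\<lambda>n. x * (c n * x^n)) sums (x * FF c x)"
    unfolding FF_def by (rule sums_mult[OF summable_sums[OF assms]])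
  moreover have "(\<lambda>n. shift c (Suc n) * x^(Suc n)) = (\<lambda>n. x * (c n * x^n))"
    by (auto simp: shift_def)
  ultimately have "(\<lambda>n. shift c (Suc n) * x^(Suc n)) sums (x * FF c x)" by simp
  then show ?thesis by (subst (asm) sums_Suc_iff) (simp add: shift_def)
qed

lemma aa_Suc: "aa (Suc n) = aa n * ((2*real n+1)/(2*real n+2))^2"
  unfolding aa_def cc.simps by (simp add: power_mult_distrib power_divide add.commute)

lemma coeff_alg: "(k::real) \<ge> 0 \<Longrightarrow>
  p*(p-1)*A - 2*p*((k+1) * (A * ((2*k+1)/(2*k+2))^2) - k * A)
   + ((k+1) * ((k+2) * (A * ((2*k+1)/(2*k+2))^2 * ((2*k+3)/(2*k+4))^2)) - 2 * (k * (k + 1) * (A * ((2*k+1)/(2*k+2))^2))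
      + (k - 1) * k * A) = A * (p^2 - p - p/(2*(k+1)) + 9/(16*(k+1)*((k+1)+1)))"
  apply (simp add: divide_simps)
  apply algebra
  done

definition qq :: "real \<Rightarrow> real \<Rightarrow> real" where
  "qq p m = p^2 - p - p/(2*m) + 9/(16*m*(m+1))"

lemma coeff_id:
  "p*(p-1)*aa n - 2*p*(real (Suc n) * aa (Suc n) - real n * aa n)
   + (real (Suc n) * (real (Suc (Suc n)) * aa (Suc (Suc n))) - 2 * (real n * (real n + 1) * aa (Suc n))
      + (real n - 1) * real n * aa n) = aa n * qq p (real (Suc n))"
proof -
  have e1: "aa (Suc n) = aa n * ((2*real n+1)/(2*real n+2))^2" by (rule aa_Suc)
  have e2: "aa (Suc (Suc n)) = aa n * ((2*real n+1)/(2*real n+2))^2 * ((2*real n+3)/(2*real n+4))^2"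
    using aa_Suc[of "Suc n"] e1 by (simp add: algebra_simps)
  have "real (Suc (Suc n)) = real n + 2" by simp
  then show ?thesis unfolding e1 e2 qq_def using coeff_alg[of "real n" p "aa n"]
    by (simp only: of_nat_Suc) (simp add: algebra_simps)
qed

definition GG :: "real \<Rightarrow> real \<Rightarrow> real" where
  "GG p x = p*(p-1)*FF aa x - 2*p*(1-x)*FF a1 x + (1-x)^2 * FF a2 x"

lemma a1_eq: "a1 n = real (Suc n) * aa (Suc n)"
  by (simp add: a1_def diffs_def)
lemma a2_eq: "a2 n = real (Suc n) * (real (Suc (Suc n)) * aa (Suc (Suc n)))"
  by (simp add: a2_def diffs_def a1_eq)
lemma sa1_eq: "shift a1 n = real n * aa n"
  by (cases n) (simp_all add: shift_def a1_eq)
lemma sa2_eq: "shift a2 n = real n * (real n + 1) * aa (Suc n)"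
  by (cases n) (simp_all add: shift_def a2_eq algebra_simps)
lemma ssa2_eq: "shift (shift a2) n = (real n - 1) * real n * aa n"
proof (cases n)
  case 0 then show ?thesis by (simp add: shift_def)
next
  case (Suc m) then show ?thesis
    by (cases m) (simp_all add: shift_def a2_eq algebra_simps)
qed

lemma G_sums:
  assumes x: "\<bar>x\<bar> < 1"
  shows "(\<lambda>n. aa n * qq p (real (Suc n)) * x^n) sums GG p x"
proof -
  have s0: "(\<lambda>n. aa n * x^n) sums FF aa x"
    unfolding FF_def by (rule summable_sums[OF summ_aa[OF x]])
  have s1: "(\<lambda>n. a1 n * x^n) sums FF a1 x"
    unfolding FF_def by (rule summable_sums[OF summ_a1[OF x]])
  have s1s: "(\<lambda>n. shift a1 n * x^n) sums (x * FF a1 x)"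
    by (rule shift_sums[OF summ_a1[OF x]])
  have s2: "(\<lambda>n. a2 n * x^n) sums FF a2 x"
    unfolding FF_def by (rule summable_sums[OF summ_a2[OF x]])
  have s2s: "(\<lambda>n. shift a2 n * x^n) sums (x * FF a2 x)"
    by (rule shift_sums[OF summ_a2[OF x]])
  have "FF (shift a2) x = x * FF a2 x"
    using sums_unique[OF s2s] unfolding FF_def by simp
  then have s2ss: "(\<lambda>n. shift (shift a2) n * x^n) sums (x * (x * FF a2 x))"
    using shift_sums[OF sums_summable[OF s2s]] by simp
  have "(\<lambda>n. p*(p-1)*(aa n * x^n) - 2*p*(a1 n * x^n - shift a1 n * x^n)
      + (a2 n * x^n - 2*(shift a2 n * x^n) + shift (shift a2) n * x^n))
     sums (p*(p-1)*FF aa x - 2*p*(FF a1 x - x * FF a1 x) + (FF a2 x - 2*(x * FF a2 x) + x * (x * FF a2 x)))"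
    by (intro sums_add sums_diff sums_mult s0 s1 s1s s2 s2s s2ss)
  moreover have "p*(p-1)*FF aa x - 2*p*(FF a1 x - x * FF a1 x) + (FF a2 x - 2*(x * FF a2 x) + x * (x * FF a2 x)) = GG p x"
    unfolding GG_def by (simp add: algebra_simps power2_eq_square)
  moreover have "p*(p-1)*(aa n * x^n) - 2*p*(a1 n * x^n - shift a1 n * x^n)
      + (a2 n * x^n - 2*(shift a2 n * x^n) + shift (shift a2) n * x^n) = aa n * qq p (real (Suc n)) * x^n" for n
  proof -
    have "p*(p-1)*(aa n * x^n) - 2*p*(a1 n * x^n - shift a1 n * x^n)
      + (a2 n * x^n - 2*(shift a2 n * x^n) + shift (shift a2) n * x^n)
      = (p*(p-1)*aa n - 2*p*(a1 n - shift a1 n) + (a2 n - 2 * shift a2 n + shift (shift a2) n)) * x^n"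
      by (simp add: algebra_simps)
    also have "p*(p-1)*aa n - 2*p*(a1 n - shift a1 n) + (a2 n - 2 * shift a2 n + shift (shift a2) n)
        = aa n * qq p (real (Suc n))"
      unfolding a1_eq a2_eq sa1_eq sa2_eq ssa2_eq by (rule coeff_id)
    finally show ?thesis .
  qed
  ultimately show ?thesis by simp
qed

lemma strict_convex_core:
  fixes f f1 f2 :: "real \<Rightarrow> real"
  assumes d1: "\<And>x. a < x \<Longrightarrow> x < b \<Longrightarrow> (f has_real_derivative f1 x) (at x)"
    and d2: "\<And>x. a < x \<Longrightarrow> x < b \<Longrightarrow> (f1 has_real_derivative f2 x) (at x)"
    and pos: "\<And>x. a < x \<Longrightarrow> x < b \<Longrightarrow> f2 x > 0"
    and xy: "a < x" "x < y" "y < b" and u: "0 < u" "u < 1"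
  shows "f ((1 - u) * x + u * y) < (1 - u) * f x + u * f y"
proof -
  define z where "z = (1 - u) * x + u * y"
  have xz: "x < z"
  proof -
    have "z - x = u * (y - x)" by (simp add: z_def algebra_simps)
    moreover have "u * (y - x) > 0" using xy u by simp
    ultimately show ?thesis by linarith
  qed
  have zy: "z < y"
  proof -
    have "y - z = (1 - u) * (y - x)" by (simp add: z_def algebra_simps)
    moreover have "(1 - u) * (y - x) > 0" using xy u by simp
    ultimately show ?thesis by linarith
  qed
  have inc: "f1 s < f1 t" if st: "a < s" "s < t" "t < b" for s t
  proof -
    have "\<exists>w. s < w \<and> w < t \<and> f1 t - f1 s = (t - s) * f2 w"
    proof (rule MVT2)
      show "s < t" by (rule st(2))
      fix v assume "s \<le> v" "v \<le> t"
      then show "(f1 has_real_derivative f2 v) (at v)" using d2 st by simp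
    qed
    then obtain w where w: "s < w" "w < t" "f1 t - f1 s = (t - s) * f2 w" by blast
    have "f2 w > 0" using pos w st by simp
    then have "(t - s) * f2 w > 0" using st by simp
    then show ?thesis using w(3) by simp
  qed
  have "\<exists>w. x < w \<and> w < z \<and> f z - f x = (z - x) * f1 w"
  proof (rule MVT2)
    show "x < z" by (rule xz)
    fix v assume "x \<le> v" "v \<le> z"
    then show "(f has_real_derivative f1 v) (at v)" using d1 xy zy by simp
  qed
  then obtain w1 where w1: "x < w1" "w1 < z" "f z - f x = (z - x) * f1 w1" by blast
  have "\<exists>w. z < w \<and> w < y \<and> f y - f z = (y - z) * f1 w"
  proof (rule MVT2)
    show "z < y" by (rule zy)
    fix v assume "z \<le> v" "v \<le> y"
    then show "(f has_real_derivative f1 v) (at v)" using d1 xy xz by simp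
  qed
  then obtain w2 where w2: "z < w2" "w2 < y" "f y - f z = (y - z) * f1 w2" by blast
  have lt: "f1 w1 < f1 w2" using w1 w2 xy by (intro inc) simp_all
  have k: "u * (1 - u) * (y - x) > 0" using u xy by simp
  have zx: "z - x = u * (y - x)" and yz: "y - z = (1 - u) * (y - x)" by (simp_all add: z_def algebra_simps)
  have "(1 - u) * (f z - f x) = u * (1 - u) * (y - x) * f1 w1"
    using w1(3) unfolding zx by simp
  also have "\<dots> < u * (1 - u) * (y - x) * f1 w2"
    by (rule mult_strict_left_mono[OF lt k])
  also have "\<dots> = u * (f y - f z)"
    using w2(3) unfolding yz by simp
  finally have "(1 - u) * (f z - f x) < u * (f y - f z)" .
  then have "f z < (1 - u) * f x + u * f y" by (simp add: algebra_simps)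
  then show ?thesis by (simp only: z_def)
qed

lemma strict_convex_deriv:
  fixes f f1 f2 :: "real \<Rightarrow> real"
  assumes d1: "\<And>x. a < x \<Longrightarrow> x < b \<Longrightarrow> (f has_real_derivative f1 x) (at x)"
    and d2: "\<And>x. a < x \<Longrightarrow> x < b \<Longrightarrow> (f1 has_real_derivative f2 x) (at x)"
    and pos: "\<And>x. a < x \<Longrightarrow> x < b \<Longrightarrow> f2 x > 0"
  shows "strictly_convex_on {a<..<b} f"
  unfolding strictly_convex_on_def
proof (intro ballI allI impI)
  fix x y u :: real assume x: "x \<in> {a<..<b}" and y: "y \<in> {a<..<b}" and h: "x \<noteq> y \<and> 0 < u \<and> u < 1"
  show "f ((1 - u) * x + u * y) < (1 - u) * f x + u * f y"
  proof (cases "x < y")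
    case True show ?thesis by (rule strict_convex_core[OF d1 d2 pos]) (use True x y h in auto)
  next
    case False
    then have "y < x" using h by auto
    have "f ((1 - (1 - u)) * y + (1 - u) * x) < (1 - (1 - u)) * f y + (1 - u) * f x"
      by (rule strict_convex_core[OF d1 d2 pos]) (use \<open>y < x\<close> x y h in auto)
    then show ?thesis by (simp add: algebra_simps)
  qed
qed

lemma concave_iff_neg: "strictly_concave_on S f \<longleftrightarrow> strictly_convex_on S (\<lambda>x. - f x)"
proof -
  have *: "(- a < (1-u)*(-b) + u*(-c)) = ((1-u)*b + u*c < a)" for a b c u :: real
    by (simp add: algebra_simps)
  show ?thesis unfolding strictly_concave_on_def strictly_convex_on_def by (simp only: *)
qed

lemma no_both:
  assumes "strictly_convex_on {0<..<1} f" "strictly_convex_on {c<..<d} (\<lambda>x. - f x)"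
    and "0 < c" "c < d" "d < 1"
  shows False
proof -
  define x y where "x = c + (d - c)/4" and "y = d - (d - c)/4"
  have x0: "0 < x" using assms(3-5) unfolding x_def by (simp add: field_simps)
  have x1: "x < 1" using assms(3-5) unfolding x_def by (simp add: field_simps)
  have x2: "c < x" using assms(3-5) unfolding x_def by (simp add: field_simps)
  have x3: "x < d" using assms(3-5) unfolding x_def by (simp add: field_simps)
  have y0: "0 < y" using assms(3-5) unfolding y_def by (simp add: field_simps)
  have y1: "y < 1" using assms(3-5) unfolding y_def by (simp add: field_simps)
  have y2: "c < y" using assms(3-5) unfolding y_def by (simp add: field_simps)
  have y3: "y < d" using assms(3-5) unfolding y_def by (simp add: field_simps)
  have xy: "x \<noteq> y" using assms(3-5) unfolding x_def y_def by (simp add: field_simps)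
  have xin: "x \<in> {0<..<1}" "x \<in> {c<..<d}" using x0 x1 x2 x3 by simp_all
  have yin: "y \<in> {0<..<1}" "y \<in> {c<..<d}" using y0 y1 y2 y3 by simp_all
  have h: "0 < (1/2::real)" "(1/2::real) < 1" by simp_all
  have "f ((1 - 1/2) * x + 1/2 * y) < (1 - 1/2) * f x + 1/2 * f y"
    using assms(1) xin yin xy h unfolding strictly_convex_on_def by blast
  moreover have "- f ((1 - 1/2) * x + 1/2 * y) < (1 - 1/2) * (- f x) + 1/2 * (- f y)"
    using assms(2) xin yin xy h unfolding strictly_convex_on_def by blast
  ultimately show False by linarith
qed

definition HH :: "real \<Rightarrow> real \<Rightarrow> real" where
  "HH p x = (1-x) powr p * (pi/2 * FF aa x)"
definition HH1 :: "real \<Rightarrow> real \<Rightarrow> real" where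
  "HH1 p x = pi/2 * (-p * ((1-x) powr (p-1) * FF aa x) + (1-x) powr p * FF a1 x)"
definition HH2 :: "real \<Rightarrow> real \<Rightarrow> real" where
  "HH2 p x = pi/2 * (1-x) powr (p-2) * GG p x"

lemma pw_deriv:
  assumes "x < 1"
  shows "((\<lambda>x. (1-x) powr r) has_real_derivative (- r * (1-x) powr (r - 1))) (at x)"
proof -
  have "((\<lambda>x. 1 - x) has_real_derivative -1) (at x)"
    by (auto intro!: derivative_eq_intros)
  from DERIV_fun_powr[OF this, of r] assms show ?thesis by simp
qed

lemma HH_deriv:
  assumes "0 < x" "x < 1"
  shows "(HH p has_real_derivative HH1 p x) (at x)"
proof -
  have ax: "\<bar>x\<bar> < 1" using assms by simp
  have "((\<lambda>x. (1-x) powr p * (pi/2 * FF aa x)) has_real_derivative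
      (1-x) powr p * (pi/2 * FF a1 x) + (- p * (1-x) powr (p - 1)) * (pi/2 * FF aa x)) (at x)"
    by (rule DERIV_mult'[OF pw_deriv[OF assms(2)] DERIV_cmult[OF d0[OF ax]]])
  moreover have "(1-x) powr p * (pi/2 * FF a1 x) + (- p * (1-x) powr (p - 1)) * (pi/2 * FF aa x) = HH1 p x"
    unfolding HH1_def by (simp add: algebra_simps)
  moreover have "(\<lambda>x. (1-x) powr p * (pi/2 * FF aa x)) = HH p"
    by (rule ext) (simp add: HH_def)
  ultimately show ?thesis by simp
qed

lemma HH1_deriv:
  assumes "0 < x" "x < 1"
  shows "(HH1 p has_real_derivative HH2 p x) (at x)"
proof -
  have ax: "\<bar>x\<bar> < 1" using assms by simp
  have t1: "((\<lambda>x. (1-x) powr (p-1) * FF aa x) has_real_derivative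
     (1-x) powr (p-1) * FF a1 x + (- (p-1) * (1-x) powr (p-1-1)) * FF aa x) (at x)"
    by (rule DERIV_mult'[OF pw_deriv[OF assms(2)] d0[OF ax]])
  have t2: "((\<lambda>x. (1-x) powr p * FF a1 x) has_real_derivative
     (1-x) powr p * FF a2 x + (- p * (1-x) powr (p-1)) * FF a1 x) (at x)"
    by (rule DERIV_mult'[OF pw_deriv[OF assms(2)] d1[OF ax]])
  have "((\<lambda>x. pi/2 * (-p * ((1-x) powr (p-1) * FF aa x) + (1-x) powr p * FF a1 x)) has_real_derivative
      pi/2 * (-p * ((1-x) powr (p-1) * FF a1 x + (- (p-1) * (1-x) powr (p-1-1)) * FF aa x)
        + ((1-x) powr p * FF a2 x + (- p * (1-x) powr (p-1)) * FF a1 x))) (at x)"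
    by (rule DERIV_cmult[OF DERIV_add[OF DERIV_cmult[OF t1] t2]])
  moreover have "pi/2 * (-p * ((1-x) powr (p-1) * FF a1 x + (- (p-1) * (1-x) powr (p-1-1)) * FF aa x)
        + ((1-x) powr p * FF a2 x + (- p * (1-x) powr (p-1)) * FF a1 x)) = HH2 p x"
  proof -
    have pa: "(1-x) powr (p-1) = (1-x) powr (p-2) * (1-x)"
      using powr_add[of "1-x" "p-2" 1] assms by simp
    have pb: "(1-x) powr p = (1-x) powr (p-2) * (1-x)^2"
      using powr_add[of "1-x" "p-2" 2] assms by simp
    have pc: "p - 1 - 1 = p - 2" by simp
    show ?thesis unfolding HH2_def GG_def pa pb pc by (simp add: algebra_simps power2_eq_square)
  qed
  moreover have "(\<lambda>x. pi/2 * (-p * ((1-x) powr (p-1) * FF aa x) + (1-x) powr p * FF a1 x)) = HH1 p"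
    by (rule ext) (simp add: HH1_def)
  ultimately show ?thesis by simp
qed

lemma GG_cont: "\<bar>x\<bar> < 1 \<Longrightarrow> isCont (GG p) x"
  unfolding GG_def
  by (intro continuous_intros DERIV_isCont[OF d0] DERIV_isCont[OF d1] DERIV_isCont[OF d2]) auto

lemma GG_0: "GG p 0 = qq p 1"
proof -
  have "(\<lambda>n. aa n * qq p (real (Suc n)) * 0^n) sums GG p 0" by (rule G_sums) simp
  then have "aa 0 * qq p (real (Suc 0)) = GG p 0" by simp
  moreover have "aa 0 = 1" by (simp add: aa_def)
  ultimately show ?thesis by simp
qed

lemma HH2_c: "0 < x \<Longrightarrow> x < 1 \<Longrightarrow> pi/2 * (1-x) powr (p-2) > 0"
  by simp
lemma pos_mult_iff1: "0 < (c::real) \<Longrightarrow> (0 < c * g) = (0 < g)"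
  by (simp add: zero_less_mult_iff)
lemma pos_mult_iff2: "0 < (c::real) \<Longrightarrow> (c * g < 0) = (g < 0)"
  by (simp add: mult_less_0_iff)
lemma HH2_eq: "HH2 p x = (pi/2 * (1-x) powr (p-2)) * GG p x"
  by (simp add: HH2_def)
lemma HH2_sign_pos: "0 < x \<Longrightarrow> x < 1 \<Longrightarrow> HH2 p x > 0 \<longleftrightarrow> GG p x > 0"
  unfolding HH2_eq by (rule pos_mult_iff1[OF HH2_c])
lemma HH2_sign_neg: "0 < x \<Longrightarrow> x < 1 \<Longrightarrow> HH2 p x < 0 \<longleftrightarrow> GG p x < 0"
  unfolding HH2_eq by (rule pos_mult_iff2[OF HH2_c])

definition pm :: real where "pm = 3*(2 - sqrt 2)/8"
definition pp :: real where "pp = 3*(2 + sqrt 2)/8"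

lemma sqrt2_sq: "sqrt 2 * sqrt 2 = (2::real)" by simp
lemma sqrt2_lo: "1.4 < sqrt (2::real)"
  by (rule real_less_rsqrt) (simp add: power2_eq_square)
lemma sqrt2_hi: "sqrt (2::real) < 1.5"
proof (rule ccontr)
  assume "\<not> sqrt (2::real) < 1.5"
  then have "1.5 \<le> sqrt (2::real)" by simp
  then have "1.5 * 1.5 \<le> sqrt (2::real) * sqrt 2" by (intro mult_mono) auto
  then show False by simp
qed

lemma pm_bounds: "0 < pm" "pm < 9/16" and pp_bounds: "1 < pp"
  using sqrt2_lo sqrt2_hi unfolding pm_def pp_def by simp_all

lemma q1_eq: "qq p 1 = (p - pm) * (p - pp)"
proof -
  have s: "pm + pp = 3/2" unfolding pm_def pp_def by (simp add: field_simps)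
  have t: "pm * pp = 9/32"
  proof -
    have "pm * pp = 9 * (4 - sqrt 2 * sqrt 2) / 64" unfolding pm_def pp_def by (simp add: algebra_simps)
    then show ?thesis by simp
  qed
  have "(p - pm) * (p - pp) = p*p - (pm + pp) * p + pm * pp" by (simp add: algebra_simps)
  also have "\<dots> = p*p - 3/2 * p + 9/32" unfolding s t by simp
  finally show ?thesis unfolding qq_def by (simp add: power2_eq_square)
qed

lemma qq_num: assumes "m > 0" shows "qq p m = (16*m*(m+1)*(p^2-p) - 8*(m+1)*p + 9) / (16*m*(m+1))"
proof -
  have m0: "m \<noteq> 0" and D: "16*m*(m+1) \<noteq> 0" using assms by simp_all
  have e1: "p/(2*m) * (16*m*(m+1)) = 8*(m+1)*p" using m0 by (simp add: field_simps)
  have e2: "9/(16*m*(m+1)) * (16*m*(m+1)) = 9" by (simp only: times_divide_eq_left nonzero_mult_div_cancel_right[OF D])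
  have "qq p m * (16*m*(m+1)) = (p^2 - p) * (16*m*(m+1)) - p/(2*m) * (16*m*(m+1)) + 9/(16*m*(m+1)) * (16*m*(m+1))"
    unfolding qq_def by (simp add: algebra_simps)
  also have "\<dots> = 16*m*(m+1)*(p^2-p) - 8*(m+1)*p + 9" unfolding e1 e2 by simp
  finally show ?thesis using D by (simp add: eq_divide_eq)
qed

lemma qq_neg_p: assumes "p \<le> 0" "m > 0" shows "qq p m > 0"
proof -
  have "p / (2*m) \<le> 0" using assms by (simp add: divide_nonpos_pos)
  moreover have "9/(16*m*(m+1)) > 0" using assms by simp
  moreover have "p^2 \<ge> 0" by simp
  ultimately show ?thesis unfolding qq_def using assms by linarith
qed

lemma num_big:
  fixes m p :: real
  assumes h: "p^2 - p \<ge> p/2 - 9/32" and p1: "p \<ge> 1" and m: "m \<ge> 2"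
  shows "16*m*(m+1)*(p^2-p) - 8*(m+1)*p + 9 > 0"
proof -
  have A: "16*m*(m+1)*(p/2 - 9/32) \<le> 16*m*(m+1)*(p^2-p)"
    using h m by (intro mult_left_mono) auto
  have B: "8*(m+1)*(m-1)*1 \<le> 8*(m+1)*(m-1)*p"
    using p1 m by (intro mult_left_mono) auto
  have C: "0 < (7*m-2)*(m-1)" using m by (intro mult_pos_pos) auto
  have "0 < (7*m-2)*(m-1)/2" using C by simp
  also have "\<dots> = 8*(m+1)*(m-1)*1 - 9*m*(m+1)/2 + 9" by (simp add: field_simps)
  also have "\<dots> \<le> 8*(m+1)*(m-1)*p - 9*m*(m+1)/2 + 9" using B by linarith
  also have "\<dots> = 16*m*(m+1)*(p/2 - 9/32) - 8*(m+1)*p + 9" by (simp add: field_simps)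
  also have "\<dots> \<le> 16*m*(m+1)*(p^2-p) - 8*(m+1)*p + 9" using A by linarith
  finally show ?thesis .
qed

lemma num_mid:
  fixes m p :: real
  assumes h: "p^2 - p \<le> p/2 - 9/32" and p0: "0 \<le> p" and p1: "p \<le> 1" and m: "m \<ge> 2"
  shows "16*m*(m+1)*(p^2-p) - 8*(m+1)*p + 9 < 0"
proof (cases "p \<le> 9/16")
  case True
  have A: "16*m*(m+1)*(p^2-p) \<le> 16*m*(m+1)*(p/2 - 9/32)"
    using h m by (intro mult_left_mono) auto
  have B: "8*(m+1)*(m-1)*p \<le> 8*(m+1)*(m-1)*(9/16)"
    using True m by (intro mult_left_mono) auto
  have "16*m*(m+1)*(p^2-p) - 8*(m+1)*p + 9 \<le> 16*m*(m+1)*(p/2 - 9/32) - 8*(m+1)*p + 9" using A by linarith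
  also have "\<dots> = 8*(m+1)*(m-1)*p - 9*m*(m+1)/2 + 9" by (simp add: field_simps)
  also have "\<dots> \<le> 8*(m+1)*(m-1)*(9/16) - 9*m*(m+1)/2 + 9" using B by linarith
  also have "\<dots> = 9/2 * (1 - m)" by (simp add: field_simps)
  also have "\<dots> < 0" using m by simp
  finally show ?thesis .
next
  case False
  have A: "p^2 - p \<le> 0" using p0 p1 by (simp add: power2_eq_square mult_le_cancel_right1 algebra_simps) (metis mult_left_le_one_le)
  have A': "16*m*(m+1)*(p^2-p) \<le> 0" using A m by (intro mult_nonneg_nonpos) auto
  have B: "8*(m+1)*(9/16) \<le> 8*(m+1)*p" using False m by (intro mult_left_mono) auto
  have B': "8*(m+1)*(9/16) \<ge> 27/2" using m by simp
  show ?thesis using A' B B' by linarith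
qed

lemma qq_big:
  assumes "pp \<le> p" "m \<ge> 1"
  shows "qq p m \<ge> 0" and "m \<ge> 2 \<Longrightarrow> qq p m > 0"
proof -
  have q1: "qq p 1 \<ge> 0" unfolding q1_eq using assms pm_bounds pp_bounds by (intro mult_nonneg_nonneg) auto
  then have h: "p^2 - p \<ge> p/2 - 9/32" unfolding qq_def by simp
  have p1: "p \<ge> 1" using assms pp_bounds by simp
  show "m \<ge> 2 \<Longrightarrow> qq p m > 0"
    using num_big[OF h p1] by (simp add: qq_num)
  show "qq p m \<ge> 0"
  proof (cases "m \<ge> 2")
    case True then show ?thesis using num_big[OF h p1] by (simp add: qq_num less_imp_le)
  next
    case False
    then have "m = 1 \<or> (1 < m \<and> m < 2)" using assms by auto
    then show ?thesis
    proof
      assume "m = 1" then show ?thesis using q1 by simp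
    next
      assume m12: "1 < m \<and> m < 2"
      have "16*m*(m+1)*(p^2-p) - 8*(m+1)*p + 9 \<ge> 0"
      proof -
        have A: "16*m*(m+1)*(p/2 - 9/32) \<le> 16*m*(m+1)*(p^2-p)"
          using h m12 by (intro mult_left_mono) auto
        have B: "8*(m+1)*(m-1)*1 \<le> 8*(m+1)*(m-1)*p"
          using p1 m12 by (intro mult_left_mono) auto
        have C: "0 < (7*m-2)*(m-1)" using m12 by (intro mult_pos_pos) auto
        have "0 < (7*m-2)*(m-1)/2" using C by simp
        also have "\<dots> = 8*(m+1)*(m-1)*1 - 9*m*(m+1)/2 + 9" by (simp add: field_simps)
        also have "\<dots> \<le> 8*(m+1)*(m-1)*p - 9*m*(m+1)/2 + 9" using B by linarith
        also have "\<dots> = 16*m*(m+1)*(p/2 - 9/32) - 8*(m+1)*p + 9" by (simp add: field_simps)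
        also have "\<dots> \<le> 16*m*(m+1)*(p^2-p) - 8*(m+1)*p + 9" using A by linarith
        finally show ?thesis by simp
      qed
      then show ?thesis using m12 by (simp add: qq_num)
    qed
  qed
qed

lemma qq_mid:
  assumes "pm \<le> p" "p \<le> 1" "m = 1 \<or> m \<ge> 2"
  shows "qq p m \<le> 0" and "m \<ge> 2 \<Longrightarrow> qq p m < 0"
proof -
  have q1: "qq p 1 \<le> 0" unfolding q1_eq using assms pm_bounds pp_bounds
    by (intro mult_nonneg_nonpos) auto
  then have h: "p^2 - p \<le> p/2 - 9/32" unfolding qq_def by simp
  have p0: "0 \<le> p" using assms pm_bounds by simp
  show m2: "m \<ge> 2 \<Longrightarrow> qq p m < 0"
    using num_mid[OF h p0 assms(2)] by (simp add: qq_num divide_neg_pos)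
  show "qq p m \<le> 0" using assms(3) q1 m2 by auto
qed

lemma GG_pos:
  assumes p: "p \<le> 0 \<or> pp \<le> p" and x: "0 < x" "x < 1"
  shows "GG p x > 0"
proof -
  have ax: "\<bar>x\<bar> < 1" using x by simp
  have S: "(\<lambda>n. aa n * qq p (real (Suc n)) * x^n) sums GG p x" by (rule G_sums[OF ax])
  have qnn: "qq p (real (Suc n)) \<ge> 0" for n
    using p qq_neg_p[of p "real (Suc n)"] qq_big(1)[of p "real (Suc n)"] by force
  have q2: "qq p (real (Suc 1)) > 0"
    using p qq_neg_p[of p "real (Suc 1)"] qq_big(2)[of p "real (Suc 1)"] by force
  have "0 < suminf (\<lambda>n. aa n * qq p (real (Suc n)) * x^n)"
  proof (rule suminf_pos2[where i=1])
    show "summable (\<lambda>n. aa n * qq p (real (Suc n)) * x^n)" using S by (rule sums_summable)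
    show "0 \<le> aa n * qq p (real (Suc n)) * x^n" for n
      using aa_pos[of n] qnn[of n] x by simp
    show "0 < aa 1 * qq p (real (Suc 1)) * x^1"
      using aa_pos[of 1] q2 x by simp
  qed
  then show ?thesis using sums_unique[OF S] by simp
qed

lemma GG_neg:
  assumes p: "pm \<le> p" "p \<le> 1" and x: "0 < x" "x < 1"
  shows "GG p x < 0"
proof -
  have ax: "\<bar>x\<bar> < 1" using x by simp
  have S: "(\<lambda>n. - (aa n * qq p (real (Suc n)) * x^n)) sums (- GG p x)"
    by (rule sums_minus[OF G_sums[OF ax]])
  have qnn: "qq p (real (Suc n)) \<le> 0" for n
    using p qq_mid(1)[of p "real (Suc n)"] by (cases n) auto
  have q2: "qq p (real (Suc 1)) < 0"
    using p qq_mid(2)[of p "real (Suc 1)"] by simp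
  have "0 < suminf (\<lambda>n. - (aa n * qq p (real (Suc n)) * x^n))"
  proof (rule suminf_pos2[where i=1])
    show "summable (\<lambda>n. - (aa n * qq p (real (Suc n)) * x^n))" using S by (rule sums_summable)
    show "0 \<le> - (aa n * qq p (real (Suc n)) * x^n)" for n
      using aa_pos[of n] qnn[of n] x by (simp add: mult_nonneg_nonpos mult_nonpos_nonneg)
    have "aa 1 * qq p (real (Suc 1)) < 0" using aa_pos[of 1] q2 by (rule mult_pos_neg)
    then have "aa 1 * qq p (real (Suc 1)) * x^1 < 0" using x by (simp add: mult_neg_pos)
    then show "0 < - (aa 1 * qq p (real (Suc 1)) * x^1)" by simp
  qed
  then show ?thesis using sums_unique[OF S] by simp
qed

lemma aa_step_alg: assumes "(0::real) \<le> k" shows "(k + 1) * ((2*k+1)/(2*k+2))^2 = k + 1/(4*(k + 1))"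
proof -
  have d: "2*k+2 \<noteq> 0" "k+1 \<noteq> 0" using assms by linarith+
  have "(k + 1) * ((2*k+1)/(2*k+2))^2 = (k+1)*(2*k+1)^2/(2*k+2)^2" by (simp add: power_divide)
  also have "\<dots> = (2*k+1)^2 / (4*(k+1))"
    using d by (simp add: divide_simps power2_eq_square) (simp add: algebra_simps)
  also have "\<dots> = k + 1/(4*(k + 1))"
    using d by (simp add: divide_simps power2_eq_square) (simp add: algebra_simps)
  finally show ?thesis .
qed

lemma aa_step: "real (Suc n) * aa (Suc n) = real n * aa n + aa n / (4*(real n + 1))"
proof -
  have "real (Suc n) * aa (Suc n) = aa n * ((real n + 1) * ((2*real n+1)/(2*real n+2))^2)"
    by (simp add: aa_Suc algebra_simps)
  also have "(real n + 1) * ((2*real n+1)/(2*real n+2))^2 = real n + 1/(4*(real n + 1))"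
    by (rule aa_step_alg) simp
  finally show ?thesis by (simp add: algebra_simps)
qed

lemma aa_n: "n \<ge> 1 \<Longrightarrow> real n * aa n \<ge> 1/4"
proof (induction n rule: nat_induct_at_least)
  case base
  then show ?case by (simp add: aa_def power2_eq_square)
next
  case (Suc n)
  have "aa n / (4*(real n + 1)) \<ge> 0" using aa_pos[of n] by simp
  then show ?case using Suc aa_step[of n] by linarith
qed

lemma aa_lower: "aa n \<ge> 1 / (4 * (real n + 1))"
proof (cases "n = 0")
  case True then show ?thesis by (simp add: aa_def)
next
  case False
  then have "real n * aa n \<ge> 1/4" using aa_n[of n] by simp
  moreover have "real n * aa n \<le> (real n + 1) * aa n" using aa_pos[of n] by simp
  ultimately have "(real n + 1) * aa n \<ge> 1/4" by linarith
  then show ?thesis by (simp add: field_simps)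
qed

lemma aa_lower4: "1 / (real n + 1) \<le> 4 * aa n"
proof -
  have pos: "0 < real n + 1" by simp
  have "(real n + 1) * aa n \<ge> 1/4"
  proof (cases "n = 0")
    case True then show ?thesis by (simp add: aa_def)
  next
    case False
    then have "real n * aa n \<ge> 1/4" using aa_n[of n] by simp
    moreover have "real n * aa n \<le> (real n + 1) * aa n" using aa_pos[of n] by simp
    ultimately show ?thesis by linarith
  qed
  then have "1 \<le> 4 * aa n * (real n + 1)" by (simp add: algebra_simps)
  then show ?thesis using pos by (simp add: divide_le_eq)
qed

lemma harm_ln: "ln (real N + 1) \<le> 4 * (\<Sum>n<N. aa n)"
proof (induction N)
  case 0 then show ?case by simp
next
  case (Suc N)
  have pos: "0 < real N + 1" by simp
  have "(real N + 1) * (1 + 1/(real N + 1)) = real (Suc N) + 1"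
    using pos by (simp add: field_simps)
  then have "ln (real (Suc N) + 1) = ln ((real N + 1) * (1 + 1/(real N + 1)))"
    by simp
  also have "\<dots> = ln (real N + 1) + ln (1 + 1/(real N + 1))"
  proof -
    have p2: "0 < 1 + 1/(real N + 1)" using pos by (simp add: add_pos_pos)
    show ?thesis by (rule ln_mult_pos[OF pos p2])
  qed
  also have "\<dots> \<le> ln (real N + 1) + 1/(real N + 1)"
    using ln_add_one_self_le_self[of "1/(real N + 1)"] by simp
  also have "\<dots> \<le> 4 * (\<Sum>n<N. aa n) + 4 * aa N" using Suc aa_lower4[of N] by linarith
  finally show ?case by (simp add: algebra_simps)
qed

lemma partial_big: "\<exists>N\<ge>M. T \<le> (\<Sum>n<N. aa n)"
proof -
  define N where "N = max M (nat \<lceil>exp (4*T)\<rceil>)"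
  have "real (nat \<lceil>exp (4*T)\<rceil>) \<le> real N" unfolding N_def by simp
  then have "exp (4*T) \<le> real N" using real_nat_ceiling_ge[of "exp (4*T)"] by linarith
  then have "exp (4*T) \<le> real N + 1" by simp
  then have "ln (exp (4*T)) \<le> ln (real N + 1)" by (subst ln_le_cancel_iff) auto
  then have "4 * T \<le> 4 * (\<Sum>n<N. aa n)" using harm_ln[of N] by simp
  then have "T \<le> (\<Sum>n<N. aa n)" by simp
  then show ?thesis using N_def by (intro exI[of _ N]) auto
qed

lemma sum_if_lt:
  assumes "M \<le> N"
  shows "(\<Sum>n<N. (if n < M then K else 0)) = real M * (K::real)"
proof -
  have e: "{..<N} \<inter> {n. n < M} = {..<M}" using assms by auto
  show ?thesis by (simp add: sum.If_cases e)
qed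

lemma near1:
  fixes q :: "nat \<Rightarrow> real"
  assumes L: "L > 0" and qM: "\<And>n. n \<ge> M \<Longrightarrow> q n \<ge> L" and qC: "\<And>n. \<bar>q n\<bar> \<le> C"
  shows "\<exists>x. 0 < x \<and> x < 1 \<and> (\<Sum>n. aa n * q n * x^n) > 0"
proof -
  have C0: "C \<ge> 0" using qC[of 0] by linarith
  define L2 where "L2 = L/2"
  have L2: "L2 > 0" using L by (simp add: L2_def)
  obtain N where N: "N \<ge> M" "(real M*(C+L2)+1)/L2 \<le> (\<Sum>n<N. aa n)"
    using partial_big by blast
  define x where "x = 1 - 1/(2*(real N+1))"
  have h0: "0 < 1/(2*(real N+1))" by simp
  have h1: "1/(2*(real N+1)) \<le> 1/2" by (simp add: field_simps)
  have x0: "0 < x" "x < 1" using h0 h1 unfolding x_def by linarith+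
  have xn1: "x^n \<le> 1" for n using x0 by (simp add: power_le_one)
  have xn0: "0 \<le> x^n" for n using x0 by simp
  have xn: "x^n \<ge> 1/2" if "n < N" for n
  proof -
    have A: "1 + real n * (- (1/(2*(real N+1)))) \<le> (1 + (- (1/(2*(real N+1)))))^n"
      by (rule Bernoulli_inequality) (use h1 in linarith)
    have xe: "(1 + (- (1/(2*(real N+1))))) = x" unfolding x_def by simp
    have B: "real n * (1/(2*(real N+1))) \<le> 1/2"
    proof -
      have "real n \<le> real N + 1" using that by simp
      then have "real n / (2*(real N+1)) \<le> (real N + 1) / (2*(real N+1))"
        by (intro divide_right_mono) auto
      also have "\<dots> = 1/2" by simp
      finally show ?thesis by simp
    qed
    have C: "1 + real n * (- (1/(2*(real N+1)))) = 1 - real n * (1/(2*(real N+1)))" by simp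
    show ?thesis using A B C unfolding xe by linarith
  qed
  have summ: "summable (\<lambda>n. aa n * q n * x^n)"
  proof (rule summable_comparison_test)
    show "\<exists>N. \<forall>n\<ge>N. norm (aa n * q n * x^n) \<le> C * x^n"
    proof (intro exI[of _ 0] allI impI)
      fix n :: nat
      have "\<bar>aa n * q n\<bar> \<le> 1 * C"
        unfolding abs_mult using aa_pos[of n] aa_le1[of n] qC[of n] C0
        by (intro mult_mono) auto
      then have "\<bar>aa n * q n\<bar> * x^n \<le> C * x^n" using xn0[of n] by (intro mult_right_mono) auto
      then show "norm (aa n * q n * x^n) \<le> C * x^n" using x0 by (simp add: abs_mult)
    qed
    show "summable (\<lambda>n. C * x^n)" using x0 by (intro summable_mult summable_geometric) simp
  qed
  have trm: "aa n * q n * x^n \<ge> L2 * aa n - (if n < M then C + L2 else 0)" if "n < N" for n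
  proof (cases "n < M")
    case True
    have "\<bar>aa n * q n * x^n\<bar> \<le> 1 * C * 1"
      unfolding abs_mult using aa_pos[of n] aa_le1[of n] qC[of n] C0 xn0[of n] xn1[of n]
      by (intro mult_mono) auto
    then have "aa n * q n * x^n \<ge> -C" by linarith
    moreover have "L2 * aa n \<le> L2" using L2 aa_le1[of n] by (intro mult_left_le) auto
    ultimately show ?thesis using True by simp
  next
    case False
    then have "q n \<ge> L" using qM by simp
    then have f1: "aa n * q n \<ge> aa n * L" using aa_pos[of n] by (intro mult_left_mono) auto
    have f2: "aa n * L \<ge> 0" using aa_pos[of n] L by simp
    have "aa n * L * (1/2) \<le> aa n * q n * x^n"
      by (rule mult_mono[OF f1 xn[OF that]]) (use f1 f2 in auto)
    then have X: "aa n * q n * x^n \<ge> aa n * L * (1/2)" by simp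
    have Y: "aa n * L * (1/2) = L2 * aa n" by (simp add: L2_def)
    have Z: "aa n * q n * x^n \<ge> L2 * aa n" using X Y by linarith
    show ?thesis using False Z by simp
  qed
  have "(\<Sum>n<N. L2 * aa n - (if n < M then C + L2 else 0)) \<le> (\<Sum>n<N. aa n * q n * x^n)"
    using trm by (intro sum_mono) simp
  moreover have "(\<Sum>n<N. L2 * aa n - (if n < M then C + L2 else 0)) = L2 * (\<Sum>n<N. aa n) - real M * (C + L2)"
    using sum_if_lt[OF N(1), of "C + L2"] by (simp add: sum_subtractf sum_distrib_left)
  moreover have "L2 * (\<Sum>n<N. aa n) \<ge> L2 * ((real M*(C+L2)+1)/L2)"
    using N(2) L2 by (intro mult_left_mono) auto
  moreover have "L2 * ((real M*(C+L2)+1)/L2) = real M*(C+L2)+1" using L2 by simp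
  moreover have "(\<Sum>n<N. aa n * q n * x^n) \<le> (\<Sum>n. aa n * q n * x^n)"
  proof (rule sum_le_suminf[OF summ])
    show "finite {..<N}" by simp
    fix n assume "n \<in> - {..<N}"
    then have "n \<ge> M" using N(1) by simp
    then have "q n \<ge> L" by (rule qM)
    then show "0 \<le> aa n * q n * x^n" using aa_pos[of n] L xn0[of n] by simp
  qed
  ultimately have "(\<Sum>n. aa n * q n * x^n) \<ge> 1" by linarith
  then show ?thesis using x0 by (intro exI[of _ x]) auto
qed

lemma qq_close:
  assumes m: "m \<ge> 1"
  shows "\<bar>qq p m - p*(p-1)\<bar> \<le> (\<bar>p\<bar>+1)/m"
proof -
  have m0: "m > 0" using m by simp
  have e: "qq p m - p*(p-1) = - (p/(2*m)) + 9/(16*m*(m+1))"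
    by (simp add: qq_def power2_eq_square algebra_simps)
  have a1: "\<bar>p/(2*m)\<bar> \<le> \<bar>p\<bar>/m"
  proof -
    have "\<bar>p/(2*m)\<bar> = \<bar>p\<bar>/(2*m)" using m0 by (simp add: abs_divide)
    also have "\<dots> \<le> \<bar>p\<bar>/m" using m0 by (intro divide_left_mono) auto
    finally show ?thesis .
  qed
  have a2: "0 \<le> 9/(16*m*(m+1))" using m0 by simp
  have a3: "9/(16*m*(m+1)) \<le> 1/m"
  proof -
    have "9/(16*m*(m+1)) = (9/(16*(m+1))) * (1/m)" by simp
    moreover have "9/(16*(m+1)) \<le> 1" using m by simp
    moreover have "0 \<le> 1/m" using m0 by simp
    moreover have "(9/(16*(m+1))) * (1/m) \<le> 1/m"
      by (rule mult_left_le_one_le) (use m0 m in auto)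
    ultimately show ?thesis by linarith
  qed
  have "\<bar>qq p m - p*(p-1)\<bar> \<le> \<bar>p/(2*m)\<bar> + 9/(16*m*(m+1))"
    unfolding e using a2 by linarith
  also have "\<dots> \<le> \<bar>p\<bar>/m + 1/m" using a1 a3 by linarith
  also have "\<dots> = (\<bar>p\<bar>+1)/m" by (simp add: add_divide_distrib)
  finally show ?thesis .
qed

lemma qq_tail:
  assumes L: "L > 0"
  shows "\<exists>M. \<forall>n\<ge>M. \<bar>qq p (real (Suc n)) - p*(p-1)\<bar> \<le> L"
proof (intro exI allI impI)
  fix n assume n: "nat \<lceil>(\<bar>p\<bar>+1)/L\<rceil> \<le> n"
  define m where "m = real (Suc n)"
  have m1: "m \<ge> 1" unfolding m_def by simp
  have "(\<bar>p\<bar>+1)/L \<le> real (nat \<lceil>(\<bar>p\<bar>+1)/L\<rceil>)" by (rule real_nat_ceiling_ge)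
  also have "\<dots> \<le> real n" using n by simp
  also have "\<dots> \<le> m" unfolding m_def by simp
  finally have "(\<bar>p\<bar>+1)/L \<le> m" .
  then have "\<bar>p\<bar>+1 \<le> m * L" using L by (simp add: divide_le_eq)
  then have b: "(\<bar>p\<bar>+1)/m \<le> L" using m1 by (simp add: divide_le_eq mult.commute)
  show "\<bar>qq p (real (Suc n)) - p*(p-1)\<bar> \<le> L"
    using qq_close[OF m1, of p] b unfolding m_def by linarith
qed

lemma qq_bound: "\<bar>qq p (real (Suc n))\<bar> \<le> \<bar>p*(p-1)\<bar> + \<bar>p\<bar> + 1"
proof -
  have m1: "real (Suc n) \<ge> 1" by simp
  have "(\<bar>p\<bar>+1)/real (Suc n) \<le> (\<bar>p\<bar>+1)/1"
    by (rule divide_left_mono) (use m1 in auto)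
  then have "(\<bar>p\<bar>+1)/real (Suc n) \<le> \<bar>p\<bar> + 1" by simp
  then show ?thesis using qq_close[OF m1, of p] by linarith
qed

lemma GG_near1_pos:
  assumes "p*(p-1) > 0"
  shows "\<exists>x. 0 < x \<and> x < 1 \<and> GG p x > 0"
proof -
  define L where "L = p*(p-1)/2"
  have L: "L > 0" using assms by (simp add: L_def)
  obtain M where M: "\<And>n. n \<ge> M \<Longrightarrow> \<bar>qq p (real (Suc n)) - p*(p-1)\<bar> \<le> L"
    using qq_tail[OF L] by blast
  have pL: "p*(p-1) = 2*L" by (simp add: L_def)
  have qM: "qq p (real (Suc n)) \<ge> L" if "n \<ge> M" for n
    using abs_le_D2[OF M[OF that]] pL by linarith
  obtain x where x: "0 < x" "x < 1" "(\<Sum>n. aa n * qq p (real (Suc n)) * x^n) > 0"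
    using near1[where q="\<lambda>n. qq p (real (Suc n))" and L=L and M=M, OF L qM qq_bound] by blast
  have "GG p x = (\<Sum>n. aa n * qq p (real (Suc n)) * x^n)"
    using sums_unique[OF G_sums[of x p]] x by simp
  then show ?thesis using x by auto
qed

lemma GG_near1_neg:
  assumes "p*(p-1) < 0"
  shows "\<exists>x. 0 < x \<and> x < 1 \<and> GG p x < 0"
proof -
  define L where "L = - (p*(p-1))/2"
  have L: "L > 0" using assms by (simp add: L_def)
  obtain M where M: "\<And>n. n \<ge> M \<Longrightarrow> \<bar>qq p (real (Suc n)) - p*(p-1)\<bar> \<le> L"
    using qq_tail[OF L] by blast
  have pL: "p*(p-1) = - 2*L" by (simp add: L_def)
  have qM: "- qq p (real (Suc n)) \<ge> L" if "n \<ge> M" for n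
    using abs_le_D1[OF M[OF that]] pL by linarith
  have qC: "\<bar>- qq p (real (Suc n))\<bar> \<le> \<bar>p*(p-1)\<bar> + \<bar>p\<bar> + 1" for n
    using qq_bound[of p n] by simp
  obtain x where x: "0 < x" "x < 1" "(\<Sum>n. aa n * (- qq p (real (Suc n))) * x^n) > 0"
    using near1[where q="\<lambda>n. - qq p (real (Suc n))" and L=L and M=M, OF L qM qC] by blast
  have ax: "\<bar>x\<bar> < 1" using x by simp
  have "(\<lambda>n. - (aa n * qq p (real (Suc n)) * x^n)) sums (- GG p x)"
    by (rule sums_minus[OF G_sums[OF ax]])
  moreover have "(\<lambda>n. - (aa n * qq p (real (Suc n)) * x^n)) = (\<lambda>n. aa n * (- qq p (real (Suc n))) * x^n)"
    by (rule ext) simp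
  ultimately have S2: "(\<lambda>n. aa n * (- qq p (real (Suc n))) * x^n) sums (- GG p x)" by simp
  have "(\<Sum>n. aa n * (- qq p (real (Suc n))) * x^n) = - GG p x"
    using sums_unique[OF S2] by simp
  then show ?thesis using x by auto
qed

lemma sign_interval:
  fixes g :: "real \<Rightarrow> real"
  assumes "isCont g x0" "g x0 < 0" "0 \<le> x0" "x0 < 1"
  shows "\<exists>c d. 0 < c \<and> c < d \<and> d < 1 \<and> (\<forall>y. c < y \<and> y < d \<longrightarrow> g y < 0)"
proof -
  have "eventually (\<lambda>y. g y < 0) (at x0)"
    using order_tendstoD(2)[OF assms(1)[unfolded isCont_def] assms(2)] .
  then obtain \<delta> where d0: "\<delta> > 0" and d1: "\<forall>y\<in>UNIV. y \<noteq> x0 \<and> dist y x0 < \<delta> \<longrightarrow> g y < 0"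
    unfolding eventually_at by blast
  have d: "\<delta> > 0" "\<And>y. y \<noteq> x0 \<Longrightarrow> dist y x0 < \<delta> \<Longrightarrow> g y < 0" using d0 d1 by auto
  define e where "e = min \<delta> (1 - x0)"
  have e: "e > 0" "e \<le> \<delta>" "e \<le> 1 - x0" using d assms by (auto simp: e_def)
  show ?thesis
  proof (intro exI conjI allI impI)
    show "0 < x0 + e/4" using e assms by simp
    show "x0 + e/4 < x0 + e/2" using e by simp
    show "x0 + e/2 < 1" using e by simp
    fix y assume y: "x0 + e/4 < y \<and> y < x0 + e/2"
    have "y \<noteq> x0" using y e by auto
    moreover have "dist y x0 < \<delta>" using y e by (simp add: dist_real_def)
    ultimately show "g y < 0" by (rule d(2))
  qed
qed

lemma conv_comb_in:
  fixes x y u :: real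
  assumes "0 < x" "x < 1" "0 < y" "y < 1" "0 < u" "u < 1"
  shows "0 < (1-u)*x + u*y" "(1-u)*x + u*y < 1"
proof -
  have a: "0 < (1-u)*x" "0 < u*y" using assms by simp_all
  then show "0 < (1-u)*x + u*y" by simp
  have "(1-u)*x < (1-u)*1" using assms by (intro mult_strict_left_mono) auto
  moreover have "u*y < u*1" using assms by (intro mult_strict_left_mono) auto
  ultimately show "(1-u)*x + u*y < 1" by simp
qed

lemma conv_cong:
  fixes f g :: "real \<Rightarrow> real"
  assumes eq: "\<And>x. 0 < x \<Longrightarrow> x < 1 \<Longrightarrow> f x = g x"
  shows "strictly_convex_on {0<..<1} f = strictly_convex_on {0<..<1} g"
proof -
  have E: "f ((1-u)*x + u*y) = g ((1-u)*x + u*y) \<and> f x = g x \<and> f y = g y"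
    if "x \<in> {0<..<1}" "y \<in> {0<..<1}" "0 < u" "u < 1" for x y u :: real
    using that conv_comb_in[of x y u] eq by simp
  show ?thesis unfolding strictly_convex_on_def
  proof (intro iffI ballI allI impI)
    fix x y u :: real assume A: "\<forall>x\<in>{0<..<1}. \<forall>y\<in>{0<..<1}. \<forall>u. x \<noteq> y \<and> 0 < u \<and> u < 1 \<longrightarrow>
        f ((1 - u) * x + u * y) < (1 - u) * f x + u * f y"
      and x: "x \<in> {0<..<1}" and y: "y \<in> {0<..<1}" and h: "x \<noteq> y \<and> 0 < u \<and> u < (1::real)"
    have "f ((1 - u) * x + u * y) < (1 - u) * f x + u * f y" using A x y h by blast
    moreover have e: "f ((1-u)*x + u*y) = g ((1-u)*x + u*y) \<and> f x = g x \<and> f y = g y"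
      by (rule E[OF x y]) (use h in auto)
    ultimately show "g ((1 - u) * x + u * y) < (1 - u) * g x + u * g y" by simp
  next
    fix x y u :: real assume A: "\<forall>x\<in>{0<..<1}. \<forall>y\<in>{0<..<1}. \<forall>u. x \<noteq> y \<and> 0 < u \<and> u < 1 \<longrightarrow>
        g ((1 - u) * x + u * y) < (1 - u) * g x + u * g y"
      and x: "x \<in> {0<..<1}" and y: "y \<in> {0<..<1}" and h: "x \<noteq> y \<and> 0 < u \<and> u < (1::real)"
    have "g ((1 - u) * x + u * y) < (1 - u) * g x + u * g y" using A x y h by blast
    moreover have e: "f ((1-u)*x + u*y) = g ((1-u)*x + u*y) \<and> f x = g x \<and> f y = g y"
      by (rule E[OF x y]) (use h in auto)
    ultimately show "f ((1 - u) * x + u * y) < (1 - u) * f x + u * f y" by simp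
  qed
qed

lemma HH_convex:
  assumes "\<And>x. 0 < x \<Longrightarrow> x < 1 \<Longrightarrow> GG p x > 0"
  shows "strictly_convex_on {0<..<1} (HH p)"
  by (rule strict_convex_deriv[of 0 1 "HH p" "HH1 p" "HH2 p"])
     (use HH_deriv HH1_deriv HH2_sign_pos assms in auto)

lemma negHH_convex:
  assumes "0 \<le> c" "d \<le> 1" "\<And>x. c < x \<Longrightarrow> x < d \<Longrightarrow> GG p x < 0"
  shows "strictly_convex_on {c<..<d} (\<lambda>x. - HH p x)"
proof (rule strict_convex_deriv[of c d _ "\<lambda>x. - HH1 p x" "\<lambda>x. - HH2 p x"])
  fix x assume x: "c < x" "x < d"
  then have x01: "0 < x" "x < 1" using assms by linarith+
  show "((\<lambda>x. - HH p x) has_real_derivative - HH1 p x) (at x)"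
    by (rule DERIV_minus[OF HH_deriv[OF x01]])
  show "((\<lambda>x. - HH1 p x) has_real_derivative - HH2 p x) (at x)"
    by (rule DERIV_minus[OF HH1_deriv[OF x01]])
  show "0 < - HH2 p x" using HH2_sign_neg[OF x01] assms(3)[OF x] by simp
qed

lemma posHH_convex:
  assumes "0 \<le> c" "d \<le> 1" "\<And>x. c < x \<Longrightarrow> x < d \<Longrightarrow> GG p x > 0"
  shows "strictly_convex_on {c<..<d} (HH p)"
proof (rule strict_convex_deriv[of c d _ "HH1 p" "HH2 p"])
  fix x assume x: "c < x" "x < d"
  then have x01: "0 < x" "x < 1" using assms by linarith+
  show "(HH p has_real_derivative HH1 p x) (at x)" by (rule HH_deriv[OF x01])
  show "(HH1 p has_real_derivative HH2 p x) (at x)" by (rule HH1_deriv[OF x01])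
  show "0 < HH2 p x" using HH2_sign_pos[OF x01] assms(3)[OF x] by simp
qed

lemma neg_point_not_convex:
  assumes "0 \<le> x0" "x0 < 1" "GG p x0 < 0"
  shows "\<not> strictly_convex_on {0<..<1} (HH p)"
proof
  assume cv: "strictly_convex_on {0<..<1} (HH p)"
  have ic: "isCont (GG p) x0" using assms by (intro GG_cont) simp
  obtain c d where cd: "0 < c" "c < d" "d < 1" "\<And>y. c < y \<Longrightarrow> y < d \<Longrightarrow> GG p y < 0"
    using sign_interval[OF ic assms(3) assms(1) assms(2)] by blast
  have "strictly_convex_on {c<..<d} (\<lambda>x. - HH p x)"
    by (rule negHH_convex) (use cd in auto)
  then show False using no_both[OF cv _ cd(1-3)] by blast
qed

lemma pos_point_not_concave:
  assumes "0 \<le> x0" "x0 < 1" "GG p x0 > 0"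
  shows "\<not> strictly_concave_on {0<..<1} (HH p)"
proof
  assume cc: "strictly_concave_on {0<..<1} (HH p)"
  then have cv: "strictly_convex_on {0<..<1} (\<lambda>x. - HH p x)" by (simp add: concave_iff_neg)
  have ic: "isCont (\<lambda>x. - GG p x) x0" using assms by (intro continuous_intros GG_cont) simp
  have ng: "- GG p x0 < 0" using assms by simp
  obtain c d where cd: "0 < c" "c < d" "d < 1" "\<And>y. c < y \<Longrightarrow> y < d \<Longrightarrow> - GG p y < 0"
    using sign_interval[OF ic ng assms(1) assms(2)] by blast
  have "strictly_convex_on {c<..<d} (HH p)"
    by (rule posHH_convex) (use cd in auto)
  moreover have "(\<lambda>x. - (- HH p x)) = HH p" by simp
  ultimately have "strictly_convex_on {c<..<d} (\<lambda>x. - (- HH p x))" by simp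
  then show False using no_both[OF cv _ cd(1-3)] by blast
qed

theorem corollary1:
  fixes p :: real
  defines "h \<equiv> (\<lambda>x::real. (1 - x) powr p * ellK x)"
  shows "(strictly_convex_on {0<..<1} h \<longleftrightarrow> p \<le> 0 \<or> p \<ge> 3 * (2 + sqrt 2) / 8)
       \<and> (strictly_concave_on {0<..<1} h \<longleftrightarrow> 3 * (2 - sqrt 2) / 8 \<le> p \<and> p \<le> 1)"
proof -
  have heq: "h x = HH p x" if "0 < x" "x < 1" for x
    using that unfolding h_def HH_def by (simp add: ellK_series FF_def)
  have cvx: "strictly_convex_on {0<..<1} h = strictly_convex_on {0<..<1} (HH p)"
    by (rule conv_cong) (rule heq)
  have ccv: "strictly_concave_on {0<..<1} h = strictly_concave_on {0<..<1} (HH p)"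
    unfolding concave_iff_neg by (rule conv_cong) (simp add: heq)
  have ppd: "3 * (2 + sqrt 2) / 8 = pp" by (simp add: pp_def)
  have pmd: "3 * (2 - sqrt 2) / 8 = pm" by (simp add: pm_def)
  have A: "strictly_convex_on {0<..<1} (HH p) \<longleftrightarrow> p \<le> 0 \<or> pp \<le> p"
  proof
    assume "p \<le> 0 \<or> pp \<le> p"
    then show "strictly_convex_on {0<..<1} (HH p)" by (intro HH_convex GG_pos) auto
  next
    assume cv: "strictly_convex_on {0<..<1} (HH p)"
    show "p \<le> 0 \<or> pp \<le> p"
    proof (rule ccontr)
      assume "\<not> (p \<le> 0 \<or> pp \<le> p)"
      then have p: "0 < p" "p < pp" by auto
      show False
      proof (cases "p < 1")
        case True
        have "p * (p - 1) < 0" using p True by (simp add: mult_pos_neg)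
        then obtain x where x: "0 < x" "x < 1" "GG p x < 0" using GG_near1_neg by blast
        have "\<not> strictly_convex_on {0<..<1} (HH p)"
          by (rule neg_point_not_convex[OF _ x(2) x(3)]) (use x(1) in simp)
        then show False using cv by simp
      next
        case False
        have "pm < p" using False pm_bounds by simp
        then have "GG p 0 < 0" unfolding GG_0 q1_eq using p by (simp add: mult_pos_neg)
        then show False using neg_point_not_convex[of 0 p] cv by simp
      qed
    qed
  qed
  have B: "strictly_concave_on {0<..<1} (HH p) \<longleftrightarrow> pm \<le> p \<and> p \<le> 1"
  proof
    assume p: "pm \<le> p \<and> p \<le> 1"
    have "strictly_convex_on {0<..<1} (\<lambda>x. - HH p x)"
      by (rule negHH_convex) (use p GG_neg in auto)
    then show "strictly_concave_on {0<..<1} (HH p)" by (simp add: concave_iff_neg)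
  next
    assume cc: "strictly_concave_on {0<..<1} (HH p)"
    show "pm \<le> p \<and> p \<le> 1"
    proof (rule ccontr)
      assume "\<not> (pm \<le> p \<and> p \<le> 1)"
      then have "p < pm \<or> 1 < p" by auto
      then show False
      proof
        assume p: "p < pm"
        have "pm < pp" using pm_bounds pp_bounds by simp
        then have "GG p 0 > 0" unfolding GG_0 q1_eq using p by (simp add: mult_neg_neg)
        then show False using pos_point_not_concave[of 0 p] cc by simp
      next
        assume p: "1 < p"
        have "p * (p - 1) > 0" using p by simp
        then obtain x where x: "0 < x" "x < 1" "GG p x > 0" using GG_near1_pos by blast
        have "\<not> strictly_concave_on {0<..<1} (HH p)"
          by (rule pos_point_not_concave[OF _ x(2) x(3)]) (use x(1) in simp)
        then show False using cc by simp
      qed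
    qed
  qed
  show ?thesis unfolding cvx ccv ppd pmd using A B by blast
qed

end
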